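(* Let $T$ be a type distribution on $\mathcal{S}\subseteq\mathbb{N}$ with $q_k=\mathbb{P}(T=k)$, $C=(C^{\text{out}},C^{\text{in}})$ a colour distribution with $p_{ij}=\mathbb{P}(C^{\text{out}}=i,C^{\text{in}}=j)$, $I:\mathcal{S}\times\mathcal{C}^{\text{out}}\to\{0,1\}$, $J:\mathcal{S}\times\mathcal{C}^{\text{in}}\to\{0,1\}$, $\mu>0$, $\lambda_i=\sum_kq_kI(k,i)$, $\varrho_j=\sum_kq_kJ(k,j)$. Assume $\mathcal{S},\mathcal{C}^{\text{out}},\mathcal{C}^{\text{in}}\subseteq\mathbb{N}$, $\mathbb{E}[T^{1+\varepsilon}]<\infty$ for some $\varepsilon>0$, $\inf_i\{\lambda_i:\lambda_i>0\}>0$ and $\inf_j\{\varrho_j:\varrho_j>0\}>0$. Then the kernel $$\kappa(t,s)=\mu\sum_{i=1}^\infty\sum_{j=1}^\infty\frac{p_{ij}I(t,i)J(s,j)}{\lambda_i\varrho_j}$$ is bounded on $\mathcal{S}\times\mathcal{S}$. *)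

theory Defs
  imports "HOL-Probability.Probability"
begin

definition lam :: "nat pmf \<Rightarrow> nat set \<Rightarrow> (nat \<Rightarrow> nat \<Rightarrow> real) \<Rightarrow> nat \<Rightarrow> real" where
  "lam q S I i = (\<Sum>\<^sub>\<infinity>k\<in>S. pmf q k * I k i)"

definition kterm :: "nat pmf \<Rightarrow> (nat \<times> nat) pmf \<Rightarrow> nat set \<Rightarrow> (nat \<Rightarrow> nat \<Rightarrow> real)
    \<Rightarrow> (nat \<Rightarrow> nat \<Rightarrow> real) \<Rightarrow> real \<Rightarrow> nat \<Rightarrow> nat \<Rightarrow> nat \<times> nat \<Rightarrow> real" where
  "kterm q p S I J \<mu> t s ij = (case ij of (i, j) \<Rightarrow>
     pmf p (i, j) * I t i * J s j / (lam q S I i * lam q S J j))"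

definition kernel :: "nat pmf \<Rightarrow> (nat \<times> nat) pmf \<Rightarrow> nat set \<Rightarrow> (nat \<Rightarrow> nat \<Rightarrow> real)
    \<Rightarrow> (nat \<Rightarrow> nat \<Rightarrow> real) \<Rightarrow> real \<Rightarrow> nat \<Rightarrow> nat \<Rightarrow> real" where
  "kernel q p S I J \<mu> t s = \<mu> * (\<Sum>\<^sub>\<infinity>ij\<in>{1..} \<times> {1..}. kterm q p S I J \<mu> t s ij)"

end

theory Submission
  imports Defs
begin

lemma lam_nonneg:
  assumes "\<And>k. k \<in> S \<Longrightarrow> I k i \<in> {0, 1}"
  shows "lam q S I i \<ge> 0"
  unfolding lam_def
proof (rule infsum_nonneg)
  fix k assume "k \<in> S"
  then have "I k i \<ge> 0" using assms by fastforce
  then show "0 \<le> pmf q k * I k i" by simp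
qed

lemma inf_le:
  assumes "x \<in> A" and "\<forall>y\<in>A. (0::real) \<le> y"
  shows "Inf A \<le> x"
  using assms by (meson bdd_belowI cInf_lower)

theorem lemma6:
  fixes q :: "nat pmf" and p :: "(nat \<times> nat) pmf"
    and S Cout Cin :: "nat set"
    and I J :: "nat \<Rightarrow> nat \<Rightarrow> real"
    and \<mu> \<epsilon> :: real
  assumes q_on_S: "set_pmf q \<subseteq> S"
    and p_on_C: "set_pmf p \<subseteq> Cout \<times> Cin"
    and I_01: "\<And>k i. k \<in> S \<Longrightarrow> i \<in> Cout \<Longrightarrow> I k i \<in> {0, 1}"
    and J_01: "\<And>k j. k \<in> S \<Longrightarrow> j \<in> Cin \<Longrightarrow> J k j \<in> {0, 1}"
    and mu_pos: "\<mu> > 0"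
    and eps_pos: "\<epsilon> > 0"
    and moment: "integrable (measure_pmf q) (\<lambda>k. real k powr (1 + \<epsilon>))"
    and inf_lam: "Inf {lam q S I i | i. i \<in> Cout \<and> lam q S I i > 0} > 0"
    and inf_rho: "Inf {lam q S J j | j. j \<in> Cin \<and> lam q S J j > 0} > 0"
  shows "\<exists>M. \<forall>t\<in>S. \<forall>s\<in>S.
           kterm q p S I J \<mu> t s summable_on ({1..} \<times> {1..}) \<and>
           \<bar>kernel q p S I J \<mu> t s\<bar> \<le> M"
proof -
  define L where "L = Inf {lam q S I i | i. i \<in> Cout \<and> lam q S I i > 0}"
  define R where "R = Inf {lam q S J j | j. j \<in> Cin \<and> lam q S J j > 0}"
  have L: "L > 0" and R: "R > 0" using inf_lam inf_rho by (auto simp: L_def R_def)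
  define g where "g = (\<lambda>ij. pmf p ij * (1 / (L * R)))"
  define A where "A = ({1::nat..} \<times> {1::nat..})"
  have gs: "(\<lambda>x. norm (g x)) summable_on A"
  proof -
    have "pmf p summable_on A" using pmf_abs_summable[of p A] abs_summable_equivalent[of "pmf p" A] by simp
    then have "g summable_on A" unfolding g_def by (rule summable_on_cmult_left)
    moreover have "\<And>x. norm (g x) = g x" using L R by (simp add: g_def)
    ultimately show ?thesis by simp
  qed
  have bound: "norm (kterm q p S I J \<mu> t s ij) \<le> norm (g ij)" if t: "t \<in> S" and s: "s \<in> S" for t s ij
  proof (cases "pmf p ij = 0")
    case True
    then show ?thesis by (cases ij) (simp add: kterm_def g_def)
  next
    case False
    obtain i j where ij: "ij = (i, j)" by fastforce
    with False p_on_C have iC: "i \<in> Cout" and jC: "j \<in> Cin" by (auto simp: set_pmf_eq)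
    have li: "lam q S I i \<ge> 0" using I_01 iC by (intro lam_nonneg) auto
    have rj: "lam q S J j \<ge> 0" using J_01 jC by (intro lam_nonneg) auto
    have It: "\<bar>I t i\<bar> \<le> 1" using I_01[OF t iC] by auto
    have Js: "\<bar>J s j\<bar> \<le> 1" using J_01[OF s jC] by auto
    show ?thesis
    proof (cases "lam q S I i = 0 \<or> lam q S J j = 0")
      case True
      then show ?thesis by (auto simp: kterm_def ij)
    next
      case False
      then have lp: "lam q S I i > 0" and rp: "lam q S J j > 0" using li rj by auto
      have "L \<le> lam q S I i" unfolding L_def
        by (rule inf_le) (use iC lp in auto)
      moreover have "R \<le> lam q S J j" unfolding R_def
        by (rule inf_le) (use jC rp in auto)
      ultimately have LR: "L * R \<le> lam q S I i * lam q S J j"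
        using L R by (intro mult_mono) auto
      have "\<bar>I t i * J s j\<bar> \<le> 1" using It Js
        by (simp add: abs_mult mult_le_one)
      have "norm (kterm q p S I J \<mu> t s ij) =
          pmf p ij * \<bar>I t i * J s j\<bar> / (lam q S I i * lam q S J j)"
        using lp rp by (simp add: kterm_def ij abs_mult)
      also have "\<dots> \<le> pmf p ij * 1 / (lam q S I i * lam q S J j)"
        using lp rp \<open>\<bar>I t i * J s j\<bar> \<le> 1\<close>
        by (intro divide_right_mono mult_left_mono) auto
      also have "\<dots> \<le> pmf p ij / (L * R)"
        using LR L R by (simp add: frac_le)
      also have "\<dots> = norm (g ij)" using L R by (simp add: g_def)
      finally show ?thesis .
    qed
  qed
  show ?thesis
  proof (intro exI[of _ "\<mu> * infsum g A"] ballI conjI)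
    fix t s assume t: "t \<in> S" and s: "s \<in> S"
    have as: "(\<lambda>x. norm (kterm q p S I J \<mu> t s x)) summable_on A"
      by (rule Infinite_Sum.abs_summable_on_comparison_test[OF gs]) (use bound t s in auto)
    then show "kterm q p S I J \<mu> t s summable_on ({1..} \<times> {1..})"
      unfolding A_def[symmetric] by (rule abs_summable_summable)
    have "\<bar>kernel q p S I J \<mu> t s\<bar> = \<mu> * norm (infsum (kterm q p S I J \<mu> t s) A)"
      using mu_pos by (simp add: kernel_def A_def abs_mult)
    also have "\<dots> \<le> \<mu> * infsum (\<lambda>x. norm (kterm q p S I J \<mu> t s x)) A"
      using mu_pos norm_infsum_bound[OF as] by simp
    also have "\<dots> \<le> \<mu> * infsum g A"
    proof -
      have "infsum (\<lambda>x. norm (kterm q p S I J \<mu> t s x)) A \<le> infsum g A"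
        using as gs bound[OF t s] L R
        by (intro infsum_mono) (auto simp: g_def abs_summable_summable)
      then show ?thesis using mu_pos by simp
    qed
    finally show "\<bar>kernel q p S I J \<mu> t s\<bar> \<le> \<mu> * infsum g A" .
  qed
qed

end
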